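(* Let $f\in\mathbb R[x_1,\dots,x_n]$ be a polynomial satisfying conditions (C1), (C2) and (C3), and let $\lambda_f$ be a map of minimal barycentric coordinates of $f$. Suppose that for every $\alpha\in V(f)$ the inequality \[ f_{\alpha}\;>\;\sum_{\alpha^\star\in D(f)\cap (2\mathbb N_0^n)^c}|f_{\alpha^\star}|\,\lambda_f(\alpha^\star,\alpha)\;-\;\sum_{\alpha^\star\in D(f)\cap 2\mathbb N_0^n}\min\{0,f_{\alpha^\star}\}\,\lambda_f(\alpha^\star,\alpha) \] holds. Then $f$ is coercive on $\mathbb R^n$, i.e. $f(x)\to+\infty$ whenever $\|x\|\to+\infty$.
   Context: Notation: $\mathbb N_0=\mathbb N\cup\{0\}$, $[n]=\{1,\dots,n\}$, $e_i$ the standard unit vectors, $(2\mathbb N_0^n)^c=\mathbb N_0^n\setminus 2\mathbb N_0^n$. Write $f(x)=\sum_{\alpha\in A(f)}f_\alpha x^\alpha$ with $A(f)\subseteq\mathbb N_0^n$ finite and $f_\alpha\neq0$ for $\alpha\in A(f)$. The Newton polytope at infinity is $\mathrm{New}_\infty(f)=\mathrm{conv}(A(f)\cup\{0\})$; $V_0(f)$ is its vertex set (it contains $0$), $V(f)=V_0(f)\setminus\{0\}$ (vertices at infinity), $V_0^c(f)=A(f)\setminus V_0(f)$, $V^c(f)=A(f)\setminus V(f)$. Conditions: (C1) $V(f)\subset 2\mathbb N_0^n$; (C2) $f_\alpha>0$ for all $\alpha\in V(f)$; (C3) for every $i\in[n]$, $V(f)$ contains a vector $2k_ie_i$ with $k_i\in\mathbb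 N$. Let $\mathcal G(f)$ be the set of nonempty faces $G$ of $\mathrm{New}_\infty(f)$ with $0\notin G$. An exponent $\alpha\in A(f)$ is gem degenerate if $\alpha\in V^c(f)\cap G$ for some $G\in\mathcal G(f)$; $D(f)$ denotes the set of gem degenerate exponents. A map of minimal barycentric coordinates of $f$ is a map $\lambda_f:V_0^c(f)\times V_0(f)\to[0,1]$ such that for each $\alpha^\star\in V_0^c(f)$ there is an affinely independent set $W_{\alpha^\star}\subseteq V_0(f)$ with $\lambda_f(\alpha^\star,\alpha)>0$ for $\alpha\in W_{\alpha^\star}$, $\lambda_f(\alpha^\star,\alpha)=0$ for $\alpha\in V_0(f)\setminus W_{\alpha^\star}$, and $\sum_{\alpha\in W_{\alpha^\star}}\lambda_f(\alpha^\star,\alpha)(\alpha,1)=(\alpha^\star,1)$. (Note $D(f)\subseteq V_0^c(f)$ under (C3).) *)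

theory Defs
  imports "HOL-Analysis.Analysis"
begin

text \<open>A real polynomial in n variables is represented by its coefficient function
  c :: nat^'n => real with finite support; exponents are vectors in nat^'n,
  points are vectors in real^'n (n = CARD('n)).\<close>

definition poly_eval :: "(nat^'n::finite \<Rightarrow> real) \<Rightarrow> real^'n \<Rightarrow> real" where
  "poly_eval c x = (\<Sum>\<alpha>\<in>{\<alpha>. c \<alpha> \<noteq> 0}. c \<alpha> * (\<Prod>i\<in>UNIV. (x $ i) ^ (\<alpha> $ i)))"

definition supp :: "(nat^'n::finite \<Rightarrow> real) \<Rightarrow> (nat^'n) set" where
  "supp c = {\<alpha>. c \<alpha> \<noteq> 0}"

definition emb :: "nat^'n::finite \<Rightarrow> real^'n" where
  "emb \<alpha> = (\<chi> i. real (\<alpha> $ i))"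

definition NewInf :: "(nat^'n::finite \<Rightarrow> real) \<Rightarrow> (real^'n) set" where
  "NewInf c = convex hull (emb ` supp c \<union> {0})"

definition V0 :: "(nat^'n::finite \<Rightarrow> real) \<Rightarrow> (nat^'n) set" where
  "V0 c = {\<alpha>. \<alpha> \<in> supp c \<union> {0} \<and> emb \<alpha> extreme_point_of NewInf c}"

definition Vinf :: "(nat^'n::finite \<Rightarrow> real) \<Rightarrow> (nat^'n) set" where
  "Vinf c = V0 c - {0}"

definition V0c :: "(nat^'n::finite \<Rightarrow> real) \<Rightarrow> (nat^'n) set" where
  "V0c c = supp c - V0 c"

definition Vc :: "(nat^'n::finite \<Rightarrow> real) \<Rightarrow> (nat^'n) set" where
  "Vc c = supp c - Vinf c"

definition even_vec :: "nat^'n::finite \<Rightarrow> bool" where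
  "even_vec \<alpha> \<longleftrightarrow> (\<forall>i. even (\<alpha> $ i))"

definition Dgem :: "(nat^'n::finite \<Rightarrow> real) \<Rightarrow> (nat^'n) set" where
  "Dgem c = {\<alpha> \<in> Vc c. \<exists>G. G face_of NewInf c \<and> G \<noteq> {} \<and> 0 \<notin> G \<and> emb \<alpha> \<in> G}"

definition C1 :: "(nat^'n::finite \<Rightarrow> real) \<Rightarrow> bool" where
  "C1 c \<longleftrightarrow> (\<forall>\<alpha>\<in>Vinf c. even_vec \<alpha>)"

definition C2 :: "(nat^'n::finite \<Rightarrow> real) \<Rightarrow> bool" where
  "C2 c \<longleftrightarrow> (\<forall>\<alpha>\<in>Vinf c. c \<alpha> > 0)"

definition C3 :: "(nat^'n::finite \<Rightarrow> real) \<Rightarrow> bool" where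
  "C3 c \<longleftrightarrow> (\<forall>i. \<exists>k::nat. k \<ge> 1 \<and> (\<chi> j. if j = i then 2 * k else 0) \<in> Vinf c)"

text \<open>Map of minimal barycentric coordinates (only values on V0c(f) x V0(f) matter).\<close>
definition min_bary_map ::
  "(nat^'n::finite \<Rightarrow> real) \<Rightarrow> (nat^'n \<Rightarrow> nat^'n \<Rightarrow> real) \<Rightarrow> bool" where
  "min_bary_map c lam \<longleftrightarrow>
     (\<forall>a\<in>V0c c. \<forall>\<alpha>\<in>V0 c. 0 \<le> lam a \<alpha> \<and> lam a \<alpha> \<le> 1) \<and>
     (\<forall>a\<in>V0c c. \<exists>W. W \<subseteq> V0 c \<and> \<not> affine_dependent (emb ` W) \<and>
        (\<forall>\<alpha>\<in>W. lam a \<alpha> > 0) \<and> (\<forall>\<alpha>\<in>V0 c - W. lam a \<alpha> = 0) \<and>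
        (\<Sum>\<alpha>\<in>W. lam a \<alpha> *\<^sub>R emb \<alpha>) = emb a \<and> (\<Sum>\<alpha>\<in>W. lam a \<alpha>) = 1)"

end

theory Submission
  imports Defs
begin


definition mon :: "real^'n::finite \<Rightarrow> real^'n \<Rightarrow> real" where
  "mon y e = (\<Prod>i\<in>UNIV. if e$i = 0 then 1 else (y$i) powr (e$i))"

lemma mon_nonneg: "mon y e \<ge> 0"
  unfolding mon_def by (intro prod_nonneg) auto

lemma mon_pos_exp:
  assumes "\<forall>i. y$i > 0"
  shows "mon y v = exp (\<Sum>i\<in>UNIV. v$i * ln (y$i))"
proof -
  have "mon y v = (\<Prod>i\<in>UNIV. exp (v$i * ln (y$i)))"
    unfolding mon_def
    apply (rule prod.cong, simp)
    subgoal for i using assms[rule_format, of i] by (auto simp: powr_def mult.commute)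
    done
  also have "\<dots> = exp (\<Sum>i\<in>UNIV. v$i * ln (y$i))" by (simp add: exp_sum)
  finally show ?thesis .
qed

lemma amgm_pos:
  fixes y e :: "real^'n::finite" and g :: "'j \<Rightarrow> real^'n"
  assumes I: "finite I" and l: "\<forall>j\<in>I. 0 \<le> l j" and s: "sum l I = 1"
    and e: "e = (\<Sum>j\<in>I. l j *\<^sub>R g j)" and y: "\<forall>i. y$i > 0"
  shows "mon y e \<le> (\<Sum>j\<in>I. l j * mon y (g j))"
proof -
  define L where "L v = (\<Sum>i\<in>UNIV. v$i * ln (y$i))" for v :: "real^'n"
  have Ne: "I \<noteq> {}" using s by auto
  have lin: "L e = (\<Sum>j\<in>I. l j * L (g j))"
    unfolding L_def e by (simp add: sum_distrib_left sum_distrib_right sum.swap[of _ I] mult.assoc)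
  have "exp (\<Sum>j\<in>I. l j *\<^sub>R L (g j)) \<le> (\<Sum>j\<in>I. l j * exp (L (g j)))"
    by (rule convex_on_sum[OF I Ne exp_convex s]) (use l in auto)
  then show ?thesis using lin y by (simp add: mon_pos_exp L_def)
qed

lemma amgm:
  fixes y e :: "real^'n::finite" and g :: "'j \<Rightarrow> real^'n"
  assumes I: "finite I" and l: "\<forall>j\<in>I. 0 \<le> l j" and s: "sum l I = 1"
    and g: "\<forall>j\<in>I. \<forall>i. 0 \<le> g j $ i"
    and e: "e = (\<Sum>j\<in>I. l j *\<^sub>R g j)" and y: "\<forall>i. y$i \<ge> 0"
  shows "mon y e \<le> (\<Sum>j\<in>I. l j * mon y (g j))"
proof (cases "\<exists>i. y$i = 0 \<and> e$i \<noteq> 0")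
  case True
  then obtain i where i: "y$i = 0" "e$i \<noteq> 0" by auto
  have "mon y e = 0" unfolding mon_def
    by (rule prod_zero) (use i in auto)
  moreover have "0 \<le> (\<Sum>j\<in>I. l j * mon y (g j))"
    by (intro sum_nonneg mult_nonneg_nonneg) (use l mon_nonneg in auto)
  ultimately show ?thesis by simp
next
  case False
  define y' where "y' = (\<chi> i. if y$i = 0 then 1 else y$i)"
  have y'pos: "\<forall>i. y'$i > 0" unfolding y'_def using y by (auto simp: less_le)
  have eq1: "mon y e = mon y' e" unfolding mon_def y'_def
    by (rule prod.cong) (use False in auto)
  have gz: "g j $ i = 0" if "j \<in> I" "l j > 0" "y$i = 0" for j i
  proof -
    have ei: "e$i = (\<Sum>j\<in>I. l j * g j $ i)" unfolding e by (simp add: sum_component)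
    have "e$i = 0" using False that by auto
    then have "\<forall>j\<in>I. l j * g j $ i = 0"
      using sum_nonneg_eq_0_iff[OF I, of "\<lambda>j. l j * g j $ i"] ei l g by auto
    then show ?thesis using that by auto
  qed
  have eq2: "(\<Sum>j\<in>I. l j * mon y (g j)) = (\<Sum>j\<in>I. l j * mon y' (g j))"
  proof (rule sum.cong)
    fix j assume j: "j \<in> I"
    show "l j * mon y (g j) = l j * mon y' (g j)"
    proof (cases "l j = 0")
      case False
      then have "l j > 0" using l j by auto
      then have "mon y (g j) = mon y' (g j)" unfolding mon_def y'_def
        by (intro prod.cong) (use gz j in auto)
      then show ?thesis by simp
    qed simp
  qed simp
  show ?thesis unfolding eq1 eq2
    by (rule amgm_pos[OF I l s e y'pos])
qed



lemma ray_face_aux: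
  fixes P :: "'a::euclidean_space set"
  shows "nat (aff_dim P + 1) = m \<Longrightarrow> polytope P \<Longrightarrow> b \<in> P \<Longrightarrow> (\<forall>t>1. t *\<^sub>R b \<notin> P)
     \<Longrightarrow> \<exists>G. G face_of P \<and> b \<in> G \<and> 0 \<notin> G"
proof (induction m arbitrary: P rule: less_induct)
  case (less m)
  have cvx: "convex P" using less.prems(2) polytope_imp_convex by blast
  show ?case
  proof (cases "0 \<in> P")
    case False
    have "P face_of P" using face_of_refl[OF cvx] .
    then show ?thesis using False less.prems(3) by blast
  next
    case True
    have b0: "b \<noteq> 0"
    proof
      assume "b = 0"
      then have "(2::real) *\<^sub>R b \<in> P" using True by simp
      moreover have "(2::real) > 1" by simp
      ultimately show False using less.prems(4) by blast
    qed
    have nri: "b \<notin> rel_interior P"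
    proof
      assume "b \<in> rel_interior P"
      then obtain e where e: "e > 0" "cball b e \<inter> affine hull P \<subseteq> P"
        using mem_rel_interior_cball by blast
      define t where "t = 1 + e / norm b"
      have t1: "t > 1" using e b0 by (simp add: t_def)
      have "b - t *\<^sub>R b = (1 - t) *\<^sub>R b" by (simp add: algebra_simps)
      then have "dist b (t *\<^sub>R b) = \<bar>1 - t\<bar> * norm b" by (simp add: dist_norm)
      also have "\<dots> = (t - 1) * norm b" using t1 by simp
      also have "\<dots> = e" using b0 by (simp add: t_def)
      finally have c: "t *\<^sub>R b \<in> cball b e" by (simp add: mem_cball)
      have bA: "b \<in> affine hull P" using less.prems(3) by (rule hull_inc)
      have zA: "0 \<in> affine hull P" using True by (rule hull_inc)
      have "t *\<^sub>R b + (1 - t) *\<^sub>R 0 \<in> affine hull P"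
        by (rule mem_affine[OF affine_affine_hull bA zA]) simp
      then have "t *\<^sub>R b \<in> cball b e \<inter> affine hull P" using c by simp
      then have "t *\<^sub>R b \<in> P" using e(2) by blast
      then show False using less.prems(4) t1 by blast
    qed
    have "closed P" using less.prems(2) polytope_imp_closed by blast
    then have "b \<in> rel_frontier P" using nri less.prems(3) by (simp add: rel_frontier_def)
    then obtain F where F: "F face_of P" "F \<noteq> P" "b \<in> F"
      using rel_frontier_of_polyhedron_alt[OF polytope_imp_polyhedron[OF less.prems(2)]] by blast
    have lt: "aff_dim F < aff_dim P" using face_of_aff_dim_lt[OF cvx F(1,2)] .
    have "aff_dim F \<ge> -1" by (rule aff_dim_geq)
    then have "nat (aff_dim F + 1) < m" using lt less.prems(1) by linarith
    moreover have "polytope F" using face_of_polytope_polytope less.prems(2) F(1) by blast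
    moreover have "\<forall>t>1. t *\<^sub>R b \<notin> F" using less.prems(4) face_of_imp_subset[OF F(1)] by blast
    ultimately have "\<exists>G. G face_of F \<and> b \<in> G \<and> 0 \<notin> G"
      using less.IH[OF _ refl _ F(3)] by blast
    then obtain G where "G face_of F" "b \<in> G" "0 \<notin> G" by blast
    then show ?thesis using face_of_trans F(1) by blast
  qed
qed

lemma ray_face:
  fixes P :: "'a::euclidean_space set"
  shows "polytope P \<Longrightarrow> b \<in> P \<Longrightarrow> (\<forall>t>1. t *\<^sub>R b \<notin> P)
     \<Longrightarrow> \<exists>G. G face_of P \<and> b \<in> G \<and> 0 \<notin> G"
  using ray_face_aux by blast



definition pmon :: "real^'n::finite \<Rightarrow> nat^'n \<Rightarrow> real" where
  "pmon x \<beta> = (\<Prod>i\<in>UNIV. (x $ i) ^ (\<beta> $ i))"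

definition yabs :: "real^'n::finite \<Rightarrow> real^'n" where
  "yabs x = (\<chi> i. \<bar>x$i\<bar>)"

lemma yabs_nonneg: "\<forall>i. yabs x $ i \<ge> 0" by (simp add: yabs_def)

lemma mon_emb: "mon (yabs x) (emb \<alpha>) = \<bar>pmon x \<alpha>\<bar>"
proof -
  have "\<bar>pmon x \<alpha>\<bar> = (\<Prod>i\<in>UNIV. \<bar>x $ i\<bar> ^ (\<alpha> $ i))"
    by (simp add: pmon_def abs_prod power_abs)
  also have "\<dots> = mon (yabs x) (emb \<alpha>)"
    unfolding mon_def yabs_def emb_def
    by (rule prod.cong) (auto simp: powr_realpow')
  finally show ?thesis by simp
qed

lemma pmon_even: "even_vec \<alpha> \<Longrightarrow> pmon x \<alpha> = \<bar>pmon x \<alpha>\<bar>"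
  unfolding pmon_def even_vec_def
  by (simp add: abs_prod power_abs power_even_abs)

lemma emb_zero[simp]: "emb 0 = 0" by (simp add: emb_def vec_eq_iff)
lemma emb_inj: "inj emb" by (auto simp: inj_def emb_def vec_eq_iff)
lemma emb_nonneg: "\<forall>i. 0 \<le> emb \<alpha> $ i" by (simp add: emb_def)
lemma mon_zero[simp]: "mon y 0 = 1" by (simp add: mon_def)

lemma mon_scale:
  assumes t: "t > 0" and y: "\<forall>i. y$i \<ge> 0"
  shows "mon y (t *\<^sub>R e) = (mon y e) powr t"
  unfolding mon_def prod_powr_distrib
  by (rule prod.cong) (use t in \<open>auto simp: powr_powr mult.commute\<close>)

lemma young:
  fixes t \<delta> :: real
  assumes t: "t > 1" and d: "\<delta> > 0"
  shows "\<exists>C. \<forall>u\<ge>0. u \<le> \<delta> * u powr t + C"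
proof -
  define C where "C = (1/\<delta>) powr (1/(t-1))"
  have Cpos: "C > 0" using d by (simp add: C_def)
  have "u \<le> \<delta> * u powr t + C" if u: "u \<ge> 0" for u
  proof (cases "u \<le> C")
    case True
    have "0 \<le> \<delta> * u powr t" using d by simp
    then show ?thesis using True by linarith
  next
    case False
    then have uC: "u > C" by simp
    then have upos: "u > 0" using Cpos by simp
    have "C powr (t-1) = 1/\<delta>" using d t by (simp add: C_def powr_powr)
    moreover have "C powr (t-1) < u powr (t-1)"
      using uC Cpos t by (intro powr_less_mono2) auto
    ultimately have "1/\<delta> < u powr (t-1)" by simp
    then have "1 < \<delta> * u powr (t-1)" using d by (simp add: field_simps)
    then have "u < u * (\<delta> * u powr (t-1))" using upos by simp
    also have "\<dots> = \<delta> * u powr t"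
      using upos by (simp add: powr_diff field_simps powr_one)
    finally show ?thesis using Cpos by simp
  qed
  then show ?thesis by blast
qed

lemma V0_sub: "V0 c \<subseteq> supp c \<union> {0}" by (auto simp: V0_def)
lemma Vinf_sub: "Vinf c \<subseteq> supp c" by (auto simp: Vinf_def V0_def)
lemma V0_Vinf: "V0 c \<subseteq> Vinf c \<union> {0}" by (auto simp: Vinf_def)

lemma NewInf_eq:
  assumes fin: "finite (supp c)"
  shows "NewInf c = convex hull (emb ` V0 c)"
proof -
  define T where "T = emb ` supp c \<union> {0}"
  have fT: "finite T" using fin by (simp add: T_def)
  have NT: "NewInf c = convex hull T" by (simp add: NewInf_def T_def)
  have "{x. x extreme_point_of (convex hull T)} = emb ` V0 c"
  proof (rule set_eqI, rule iffI)
    fix x assume "x \<in> {x. x extreme_point_of (convex hull T)}"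
    then have ex: "x extreme_point_of (convex hull T)" by (rule CollectD)
    then have "x \<in> T" by (rule extreme_point_of_convex_hull)
    then have "\<exists>\<alpha>. \<alpha> \<in> supp c \<union> {0} \<and> x = emb \<alpha>" unfolding T_def
    proof
      assume "x \<in> emb ` supp c" then show ?thesis by blast
    next
      assume "x \<in> {0}" then have "x = emb 0" by simp
      then show ?thesis by blast
    qed
    then obtain \<alpha> where a: "\<alpha> \<in> supp c \<union> {0}" "x = emb \<alpha>" by blast
    have "emb \<alpha> extreme_point_of NewInf c" using ex a(2) NT by simp
    then have "\<alpha> \<in> V0 c" using a(1) unfolding V0_def by blast
    then show "x \<in> emb ` V0 c" using a(2) by blast
  next
    fix x assume "x \<in> emb ` V0 c"
    then obtain \<alpha> where "\<alpha> \<in> V0 c" "x = emb \<alpha>" by blast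
    then have "x extreme_point_of NewInf c" unfolding V0_def by blast
    then show "x \<in> {x. x extreme_point_of (convex hull T)}" using NT by simp
  qed
  then show ?thesis using Krein_Milman_polytope[OF fT] NT by simp
qed

lemma finite_V0: "finite (supp c) \<Longrightarrow> finite (V0 c)"
  using V0_sub finite_subset by blast

lemma mon_bound_hull:
  fixes c :: "nat^'n::finite \<Rightarrow> real"
  assumes fin: "finite (supp c)" and p: "p \<in> NewInf c" and y: "\<forall>i. y$i \<ge> 0"
  shows "mon y p \<le> 1 + (\<Sum>\<alpha>\<in>Vinf c. mon y (emb \<alpha>))"
proof -
  have fV: "finite (emb ` V0 c)" using finite_V0[OF fin] by simp
  obtain u where u: "\<forall>q\<in>emb ` V0 c. 0 \<le> u q" "sum u (emb ` V0 c) = 1"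
     "(\<Sum>q\<in>emb ` V0 c. u q *\<^sub>R q) = p"
    using p unfolding NewInf_eq[OF fin] convex_hull_finite[OF fV] by blast
  have "mon y p \<le> (\<Sum>q\<in>emb ` V0 c. u q * mon y q)"
    by (rule amgm[OF fV u(1,2)]) (use u(3) y emb_nonneg in auto)
  also have "\<dots> \<le> (\<Sum>q\<in>emb ` V0 c. mon y q)"
  proof (rule sum_mono)
    fix q assume q: "q \<in> emb ` V0 c"
    have "u q \<le> 1" using member_le_sum[OF q, of u] u fV by auto
    then show "u q * mon y q \<le> mon y q"
      using mon_nonneg[of y q] by (simp add: mult_left_le_one_le u(1) q)
  qed
  also have "\<dots> = (\<Sum>\<alpha>\<in>V0 c. mon y (emb \<alpha>))"
    by (rule sum.reindex_cong[of emb]) (use emb_inj in \<open>auto intro: inj_on_subset\<close>)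
  also have "\<dots> \<le> (\<Sum>\<alpha>\<in>Vinf c \<union> {0}. mon y (emb \<alpha>))"
  proof (rule sum_mono2)
    show "finite (Vinf c \<union> {0})" using finite_subset[OF Vinf_sub fin] by simp
    show "V0 c \<subseteq> Vinf c \<union> {0}" by (rule V0_Vinf)
  qed (rule mon_nonneg)
  also have "\<dots> = 1 + (\<Sum>\<alpha>\<in>Vinf c. mon y (emb \<alpha>))"
  proof -
    have "0 \<notin> Vinf c" by (simp add: Vinf_def)
    moreover have "finite (Vinf c)" using fin Vinf_sub finite_subset by blast
    ultimately show ?thesis by simp
  qed
  finally show ?thesis .
qed

lemma Dgem_V0c: "Dgem c \<subseteq> V0c c"
proof
  fix a assume a: "a \<in> Dgem c"
  then have s: "a \<in> supp c" "a \<notin> Vinf c" by (auto simp: Dgem_def Vc_def)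
  obtain G where "emb a \<in> G" "0 \<notin> G" using a by (auto simp: Dgem_def)
  then have "a \<noteq> 0" by auto
  then have "a \<notin> V0 c" using s by (auto simp: Vinf_def)
  then show "a \<in> V0c c" using s by (simp add: V0c_def)
qed

lemma amgm_D:
  assumes mb: "min_bary_map c lam" and a: "a \<in> V0c c" and fin: "finite (supp c)"
    and y: "\<forall>i. y$i \<ge> 0"
  shows "mon y (emb a) \<le> (\<Sum>v\<in>V0 c. lam a v * mon y (emb v))"
proof -
  obtain W where W: "W \<subseteq> V0 c" "\<forall>\<alpha>\<in>W. lam a \<alpha> > 0" "\<forall>\<alpha>\<in>V0 c - W. lam a \<alpha> = 0"
     "(\<Sum>\<alpha>\<in>W. lam a \<alpha> *\<^sub>R emb \<alpha>) = emb a" "(\<Sum>\<alpha>\<in>W. lam a \<alpha>) = 1"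
    using mb a unfolding min_bary_map_def by blast
  have fW: "finite W" using W(1) finite_V0[OF fin] finite_subset by blast
  have "mon y (emb a) \<le> (\<Sum>v\<in>W. lam a v * mon y (emb v))"
    by (rule amgm[OF fW _ W(5)]) (use W(2,4) y emb_nonneg less_imp_le in auto)
  also have "\<dots> = (\<Sum>v\<in>V0 c. lam a v * mon y (emb v))"
    by (rule sum.mono_neutral_left) (use W(1,3) finite_V0[OF fin] in auto)
  finally show ?thesis .
qed

lemma R_ray:
  assumes fin: "finite (supp c)" and b: "\<beta> \<in> supp c" "\<beta> \<notin> Vinf c" "\<beta> \<notin> Dgem c"
  shows "\<exists>t>1. t *\<^sub>R emb \<beta> \<in> NewInf c"
proof (rule ccontr)
  assume "\<not> ?thesis"
  then have nt: "\<forall>t>1. t *\<^sub>R emb \<beta> \<notin> NewInf c" by auto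
  have "polytope (NewInf c)" unfolding NewInf_def using fin by (simp add: polytope_convex_hull)
  moreover have "emb \<beta> \<in> NewInf c" unfolding NewInf_def using b(1) by (intro hull_inc) auto
  ultimately obtain G where "G face_of NewInf c" "emb \<beta> \<in> G" "0 \<notin> G"
    using ray_face nt by blast
  then have "\<beta> \<in> Dgem c" using b by (auto simp: Dgem_def Vc_def)
  then show False using b by blast
qed



lemma D_bound:
  fixes c :: "nat^'n::finite \<Rightarrow> real"
  assumes fin: "finite (supp c)" and mb: "min_bary_map c lam" and a: "a \<in> Dgem c"
  shows "c a * pmon x a \<ge>
     - (\<Sum>\<alpha>\<in>Vinf c. ((if even_vec a then - min 0 (c a) else \<bar>c a\<bar>) * lam a \<alpha>) * mon (yabs x) (emb \<alpha>))
     - \<bar>c a\<bar>"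
proof -
  define y where "y = yabs x"
  define m where "m v = mon y (emb v)" for v
  define k where "k = (if even_vec a then - min 0 (c a) else \<bar>c a\<bar>)"
  define A where "A = (\<Sum>v\<in>Vinf c. lam a v * m v)"
  have aV: "a \<in> V0c c" using a Dgem_V0c by blast
  have fV0: "finite (V0 c)" using finite_V0[OF fin] .
  have lam_nn: "\<forall>v\<in>V0 c. 0 \<le> lam a v \<and> lam a v \<le> 1" using mb aV unfolding min_bary_map_def by blast
  have ViV0: "Vinf c = V0 c - {0}" by (simp add: Vinf_def)
  have ma: "m a \<le> (\<Sum>v\<in>V0 c. lam a v * m v)"
    unfolding m_def y_def by (rule amgm_D[OF mb aV fin yabs_nonneg])
  have m0: "m 0 = 1" by (simp add: m_def)
  have split: "(\<Sum>v\<in>V0 c. lam a v * m v) \<le> A + 1"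
  proof (cases "0 \<in> V0 c")
    case True
    have "(\<Sum>v\<in>V0 c. lam a v * m v) = lam a 0 * m 0 + (\<Sum>v\<in>V0 c - {0}. lam a v * m v)"
      by (rule sum.remove[OF fV0 True])
    then show ?thesis using lam_nn True m0 ViV0 A_def by auto
  next
    case False
    then have "V0 c = Vinf c" using ViV0 by auto
    then show ?thesis by (simp add: A_def)
  qed
  have Anonneg: "A \<ge> 0" unfolding A_def m_def
    by (intro sum_nonneg mult_nonneg_nonneg) (use lam_nn ViV0 mon_nonneg in auto)
  have mapos: "m a \<ge> 0" by (simp add: m_def mon_nonneg)
  have maA: "m a \<le> A + 1" using ma split by linarith
  have sumeq: "(\<Sum>\<alpha>\<in>Vinf c. ((if even_vec a then - min 0 (c a) else \<bar>c a\<bar>) * lam a \<alpha>) * mon (yabs x) (emb \<alpha>))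
      = k * A"
    unfolding A_def k_def m_def y_def by (simp add: sum_distrib_left mult.assoc)
  have pm: "\<bar>pmon x a\<bar> = m a" by (simp add: m_def y_def mon_emb)
  have "c a * pmon x a \<ge> - k * A - \<bar>c a\<bar>"
  proof (cases "even_vec a")
    case True
    then have "pmon x a = m a" using pm pmon_even by metis
    have "c a * m a \<ge> min 0 (c a) * m a" using mapos by (intro mult_right_mono) auto
    moreover have "min 0 (c a) * m a \<ge> min 0 (c a) * (A + 1)"
      using maA by (intro mult_left_mono_neg) auto
    moreover have "min 0 (c a) * (A + 1) = - k * A + min 0 (c a)" using True by (simp add: k_def algebra_simps)
    moreover have "min 0 (c a) \<ge> - \<bar>c a\<bar>" by simp
    moreover have "c a * pmon x a = c a * m a" using \<open>pmon x a = m a\<close> by simp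
    ultimately show ?thesis by linarith
  next
    case False
    have "c a * pmon x a \<ge> - (\<bar>c a\<bar> * \<bar>pmon x a\<bar>)"
      by (metis abs_ge_minus_self abs_mult minus_le_iff)
    moreover have "\<bar>c a\<bar> * m a \<le> \<bar>c a\<bar> * (A + 1)" using maA by (intro mult_left_mono) auto
    ultimately show ?thesis using False pm by (simp add: k_def algebra_simps)
  qed
  then show ?thesis using sumeq by simp
qed

lemma R_bound:
  fixes c :: "nat^'n::finite \<Rightarrow> real"
  assumes fin: "finite (supp c)" and b: "\<beta> \<in> supp c" "\<beta> \<notin> Vinf c" "\<beta> \<notin> Dgem c"
    and \<eta>: "\<eta> > 0"
  shows "\<exists>C. \<forall>x. \<bar>c \<beta>\<bar> * \<bar>pmon x \<beta>\<bar> \<le> \<eta> * (1 + (\<Sum>\<alpha>\<in>Vinf c. mon (yabs x) (emb \<alpha>))) + C"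
proof -
  obtain t where t: "t > 1" "t *\<^sub>R emb \<beta> \<in> NewInf c" using R_ray[OF fin b] by blast
  define \<delta> where "\<delta> = \<eta> / (\<bar>c \<beta>\<bar> + 1)"
  have dpos: "\<delta> > 0" using \<eta> by (simp add: \<delta>_def add_pos_nonneg)
  obtain C0 where C0: "\<forall>u\<ge>0. u \<le> \<delta> * u powr t + C0" using young[OF t(1) dpos] by blast
  have cd: "\<bar>c \<beta>\<bar> * \<delta> \<le> \<eta>"
  proof -
    have "\<bar>c \<beta>\<bar> * \<delta> = \<eta> * (\<bar>c \<beta>\<bar> / (\<bar>c \<beta>\<bar> + 1))" by (simp add: \<delta>_def)
    also have "\<dots> \<le> \<eta> * 1" using \<eta> by (intro mult_left_mono) auto
    finally show ?thesis by simp
  qed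
  have "\<bar>c \<beta>\<bar> * \<bar>pmon x \<beta>\<bar> \<le> \<eta> * (1 + (\<Sum>\<alpha>\<in>Vinf c. mon (yabs x) (emb \<alpha>))) + \<bar>c \<beta>\<bar> * C0" for x
  proof -
    define u where "u = mon (yabs x) (emb \<beta>)"
    define S where "S = (\<Sum>\<alpha>\<in>Vinf c. mon (yabs x) (emb \<alpha>))"
    have u0: "u \<ge> 0" by (simp add: u_def mon_nonneg)
    have S0: "1 + S \<ge> 0" unfolding S_def by (smt (verit) mon_nonneg sum_nonneg)
    have "u powr t = mon (yabs x) (t *\<^sub>R emb \<beta>)"
      unfolding u_def using t(1) by (simp add: mon_scale yabs_nonneg)
    also have "\<dots> \<le> 1 + S" unfolding S_def by (rule mon_bound_hull[OF fin t(2) yabs_nonneg])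
    finally have ut: "u powr t \<le> 1 + S" .
    have "u \<le> \<delta> * u powr t + C0" using C0 u0 by blast
    also have "\<dots> \<le> \<delta> * (1 + S) + C0" using ut dpos by simp
    finally have "\<bar>c \<beta>\<bar> * u \<le> \<bar>c \<beta>\<bar> * (\<delta> * (1 + S) + C0)" by (intro mult_left_mono) auto
    also have "\<dots> = (\<bar>c \<beta>\<bar> * \<delta>) * (1 + S) + \<bar>c \<beta>\<bar> * C0" by (simp add: algebra_simps)
    also have "\<dots> \<le> \<eta> * (1 + S) + \<bar>c \<beta>\<bar> * C0" using cd S0 by (intro add_right_mono mult_right_mono) auto
    finally show ?thesis by (simp add: u_def S_def mon_emb)
  qed
  then show ?thesis by blast
qed



lemma axis_pmon:
  fixes x :: "real^'n::finite"
  shows "pmon x (\<chi> j. if j = i then 2 * k else 0) = (x$i)^(2*k)"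
proof -
  have "pmon x (\<chi> j. if j = i then 2 * k else 0) = (\<Prod>j\<in>UNIV. if j = i then (x$j)^(2*k) else 1)"
    unfolding pmon_def by (rule prod.cong) auto
  also have "\<dots> = (x$i)^(2*k)" by (simp add: prod.delta)
  finally show ?thesis .
qed

lemma lower_bound:
  fixes c :: "nat^'n::finite \<Rightarrow> real" and lam :: "nat^'n \<Rightarrow> nat^'n \<Rightarrow> real"
  assumes fin: "finite (supp c)"
    and C1: "C1 c" and C3: "C3 c"
    and mb: "min_bary_map c lam"
    and hyp: "\<forall>\<alpha>\<in>Vinf c. c \<alpha> >
           (\<Sum>a\<in>{a\<in>Dgem c. \<not> even_vec a}. \<bar>c a\<bar> * lam a \<alpha>)
         - (\<Sum>a\<in>{a\<in>Dgem c. even_vec a}. min 0 (c a) * lam a \<alpha>)"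
  shows "\<exists>\<epsilon>>0. \<exists>K. \<forall>x. poly_eval c x \<ge> \<epsilon> * (\<Sum>\<alpha>\<in>Vinf c. mon (yabs x) (emb \<alpha>)) - K"
proof -
  define Vi where "Vi = Vinf c"
  define D where "D = Dgem c"
  define R where "R = supp c - Vi - D"
  have finVi: "finite Vi" unfolding Vi_def using finite_subset[OF Vinf_sub fin] .
  have DS: "D \<subseteq> supp c" by (auto simp: D_def Dgem_def Vc_def)
  have finD: "finite D" using finite_subset[OF DS fin] .
  have finR: "finite R" using fin by (simp add: R_def)
  have ViD: "Vi \<inter> D = {}" by (auto simp: Vi_def D_def Dgem_def Vc_def)
  have suppeq: "supp c = Vi \<union> D \<union> R" using DS Vinf_sub unfolding R_def Vi_def by blast
  define w where "w a \<alpha> = (if even_vec a then - min 0 (c a) else \<bar>c a\<bar>) * lam a \<alpha>" for a \<alpha>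
  define s where "s \<alpha> = (\<Sum>a\<in>D. w a \<alpha>)" for \<alpha>
  have s_lt: "c \<alpha> - s \<alpha> > 0" if "\<alpha> \<in> Vi" for \<alpha>
  proof -
    have "s \<alpha> = (\<Sum>a\<in>D \<inter> {a. even_vec a}. - min 0 (c a) * lam a \<alpha>) + (\<Sum>a\<in>D \<inter> - {a. even_vec a}. \<bar>c a\<bar> * lam a \<alpha>)"
      unfolding s_def w_def if_distrib[of "\<lambda>z. z * lam _ \<alpha>"] by (rule sum.If_cases[OF finD])
    also have "\<dots> = (\<Sum>a\<in>{a\<in>Dgem c. \<not> even_vec a}. \<bar>c a\<bar> * lam a \<alpha>)
         - (\<Sum>a\<in>{a\<in>Dgem c. even_vec a}. min 0 (c a) * lam a \<alpha>)"
    proof -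
      have e1: "D \<inter> {a. even_vec a} = {a\<in>Dgem c. even_vec a}" by (auto simp: D_def)
      have e2: "D \<inter> - {a. even_vec a} = {a\<in>Dgem c. \<not> even_vec a}" by (auto simp: D_def)
      show ?thesis unfolding e1 e2 by (simp add: sum_negf)
    qed
    finally show ?thesis using hyp that by (simp add: Vi_def)
  qed
  obtain i0 :: 'n where True by blast
  obtain k0 where "(\<chi> j. if j = i0 then 2 * k0 else 0) \<in> Vinf c" using C3 unfolding C3_def by blast
  then have ViNE: "Vi \<noteq> {}" by (auto simp: Vi_def)
  define \<epsilon> where "\<epsilon> = Min ((\<lambda>\<alpha>. c \<alpha> - s \<alpha>) ` Vi)"
  have epos: "\<epsilon> > 0" unfolding \<epsilon>_def using finVi ViNE s_lt by (subst Min_gr_iff) auto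
  have ele: "\<epsilon> \<le> c \<alpha> - s \<alpha>" if "\<alpha> \<in> Vi" for \<alpha> unfolding \<epsilon>_def using finVi that by (intro Min_le) auto
  define N where "N = card (supp c) + 1"
  have Npos: "real N > 0" by (simp add: N_def)
  define \<eta> where "\<eta> = \<epsilon> / (2 * real N)"
  have etapos: "\<eta> > 0" using epos Npos by (simp add: \<eta>_def)
  define Sf where "Sf x = (\<Sum>\<alpha>\<in>Vi. mon (yabs x) (emb \<alpha>))" for x
  have Sf0: "Sf x \<ge> 0" for x unfolding Sf_def by (intro sum_nonneg mon_nonneg)
  have "\<forall>\<beta>\<in>R. \<exists>C. \<forall>x. \<bar>c \<beta>\<bar> * \<bar>pmon x \<beta>\<bar> \<le> \<eta> * (1 + Sf x) + C"
  proof
    fix \<beta> assume "\<beta> \<in> R"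
    then have b: "\<beta> \<in> supp c" "\<beta> \<notin> Vinf c" "\<beta> \<notin> Dgem c" by (auto simp: R_def Vi_def D_def)
    show "\<exists>C. \<forall>x. \<bar>c \<beta>\<bar> * \<bar>pmon x \<beta>\<bar> \<le> \<eta> * (1 + Sf x) + C"
      using R_bound[OF fin b etapos] unfolding Sf_def Vi_def .
  qed
  then obtain Cf where Cf: "\<forall>\<beta>\<in>R. \<forall>x. \<bar>c \<beta>\<bar> * \<bar>pmon x \<beta>\<bar> \<le> \<eta> * (1 + Sf x) + Cf \<beta>"
    by metis
  define K where "K = (\<Sum>a\<in>D. \<bar>c a\<bar>) + \<epsilon> / 2 + (\<Sum>\<beta>\<in>R. Cf \<beta>)"
  have "poly_eval c x \<ge> (\<epsilon> / 2) * Sf x - K" for x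
  proof -
    define m where "m v = mon (yabs x) (emb v)" for v
    have pe: "poly_eval c x = (\<Sum>\<beta>\<in>supp c. c \<beta> * pmon x \<beta>)"
      by (simp add: poly_eval_def supp_def pmon_def)
    have ViR: "(Vi \<union> D) \<inter> R = {}" by (auto simp: R_def)
    have split: "(\<Sum>\<beta>\<in>supp c. c \<beta> * pmon x \<beta>) = (\<Sum>\<beta>\<in>Vi. c \<beta> * pmon x \<beta>) + (\<Sum>\<beta>\<in>D. c \<beta> * pmon x \<beta>) + (\<Sum>\<beta>\<in>R. c \<beta> * pmon x \<beta>)"
      unfolding suppeq using finVi finD finR ViD ViR by (simp add: sum.union_disjoint)
    have T1: "(\<Sum>\<beta>\<in>Vi. c \<beta> * pmon x \<beta>) = (\<Sum>\<beta>\<in>Vi. c \<beta> * m \<beta>)"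
    proof (rule sum.cong)
      fix \<beta> assume "\<beta> \<in> Vi"
      then have "even_vec \<beta>" using C1 by (simp add: C1_def Vi_def)
      then have "pmon x \<beta> = m \<beta>" unfolding m_def mon_emb by (rule pmon_even)
      then show "c \<beta> * pmon x \<beta> = c \<beta> * m \<beta>" by simp
    qed simp
    have T2: "(\<Sum>\<beta>\<in>D. c \<beta> * pmon x \<beta>) \<ge> (\<Sum>a\<in>D. - (\<Sum>\<alpha>\<in>Vi. w a \<alpha> * m \<alpha>) - \<bar>c a\<bar>)"
    proof (rule sum_mono)
      fix a assume "a \<in> D"
      then show "- (\<Sum>\<alpha>\<in>Vi. w a \<alpha> * m \<alpha>) - \<bar>c a\<bar> \<le> c a * pmon x a"
        using D_bound[OF fin mb, of a x] unfolding w_def m_def Vi_def D_def by simp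
    qed
    have T2': "(\<Sum>a\<in>D. - (\<Sum>\<alpha>\<in>Vi. w a \<alpha> * m \<alpha>) - \<bar>c a\<bar>) = - (\<Sum>\<alpha>\<in>Vi. s \<alpha> * m \<alpha>) - (\<Sum>a\<in>D. \<bar>c a\<bar>)"
      unfolding s_def by (simp add: sum_subtractf sum_negf sum_distrib_right sum.swap[of _ D])
    have T12: "(\<Sum>\<beta>\<in>Vi. c \<beta> * m \<beta>) - (\<Sum>\<alpha>\<in>Vi. s \<alpha> * m \<alpha>) \<ge> \<epsilon> * Sf x"
    proof -
      have "(\<Sum>\<beta>\<in>Vi. c \<beta> * m \<beta>) - (\<Sum>\<alpha>\<in>Vi. s \<alpha> * m \<alpha>) = (\<Sum>\<alpha>\<in>Vi. (c \<alpha> - s \<alpha>) * m \<alpha>)"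
        by (simp add: sum_subtractf left_diff_distrib)
      also have "\<dots> \<ge> (\<Sum>\<alpha>\<in>Vi. \<epsilon> * m \<alpha>)"
        by (intro sum_mono mult_right_mono) (use ele mon_nonneg m_def in auto)
      finally show ?thesis by (simp add: Sf_def m_def sum_distrib_left)
    qed
    have T3: "(\<Sum>\<beta>\<in>R. c \<beta> * pmon x \<beta>) \<ge> - (\<Sum>\<beta>\<in>R. \<eta> * (1 + Sf x) + Cf \<beta>)"
    proof -
      have "(\<Sum>\<beta>\<in>R. c \<beta> * pmon x \<beta>) \<ge> (\<Sum>\<beta>\<in>R. - (\<eta> * (1 + Sf x) + Cf \<beta>))"
      proof (rule sum_mono)
        fix \<beta> assume "\<beta> \<in> R"
        then have "\<bar>c \<beta>\<bar> * \<bar>pmon x \<beta>\<bar> \<le> \<eta> * (1 + Sf x) + Cf \<beta>" using Cf by blast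
        moreover have "c \<beta> * pmon x \<beta> \<ge> - (\<bar>c \<beta>\<bar> * \<bar>pmon x \<beta>\<bar>)"
          by (metis abs_ge_minus_self abs_mult minus_le_iff)
        ultimately show "- (\<eta> * (1 + Sf x) + Cf \<beta>) \<le> c \<beta> * pmon x \<beta>" by linarith
      qed
      moreover have "(\<Sum>\<beta>\<in>R. - (\<eta> * (1 + Sf x) + Cf \<beta>)) = - (\<Sum>\<beta>\<in>R. \<eta> * (1 + Sf x) + Cf \<beta>)"
        by (rule sum_negf)
      ultimately show ?thesis by linarith
    qed
    have T3': "(\<Sum>\<beta>\<in>R. \<eta> * (1 + Sf x) + Cf \<beta>) \<le> \<epsilon> / 2 * (1 + Sf x) + (\<Sum>\<beta>\<in>R. Cf \<beta>)"
    proof -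
      have cR: "card R \<le> card (supp c)" using fin by (intro card_mono) (auto simp: R_def)
      have "(\<Sum>\<beta>\<in>R. \<eta> * (1 + Sf x) + Cf \<beta>) = real (card R) * (\<eta> * (1 + Sf x)) + (\<Sum>\<beta>\<in>R. Cf \<beta>)"
        by (simp add: sum.distrib)
      also have "real (card R) * (\<eta> * (1 + Sf x)) \<le> real N * (\<eta> * (1 + Sf x))"
        using cR etapos Sf0[of x] by (intro mult_right_mono) (auto simp: N_def)
      also have "real N * (\<eta> * (1 + Sf x)) = \<epsilon> / 2 * (1 + Sf x)"
        using Npos by (simp add: \<eta>_def)
      finally show ?thesis by simp
    qed
    have q1: "\<epsilon> / 2 * (1 + Sf x) = \<epsilon> / 2 + (\<epsilon> / 2) * Sf x" by (simp add: algebra_simps)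
    have q2: "\<epsilon> * Sf x = (\<epsilon> / 2) * Sf x + (\<epsilon> / 2) * Sf x" by (simp add: algebra_simps)
    show ?thesis using pe split T1 T2 T2' T12 T3 T3' q1 q2 unfolding K_def by linarith
  qed
  then show ?thesis using epos unfolding Sf_def Vi_def by (intro exI[of _ "\<epsilon>/2"]) auto
qed



theorem mainTheorem1:
  fixes c :: "nat^'n::finite \<Rightarrow> real" and lam :: "nat^'n \<Rightarrow> nat^'n \<Rightarrow> real"
  assumes "finite (supp c)"
    and "C1 c" and "C2 c" and "C3 c"
    and "min_bary_map c lam"
    and "\<forall>\<alpha>\<in>Vinf c. c \<alpha> >
           (\<Sum>a\<in>{a\<in>Dgem c. \<not> even_vec a}. \<bar>c a\<bar> * lam a \<alpha>)
         - (\<Sum>a\<in>{a\<in>Dgem c. even_vec a}. min 0 (c a) * lam a \<alpha>)"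
  shows "filterlim (poly_eval c) at_top at_infinity"
proof -
  obtain \<epsilon> K where epos: "\<epsilon> > 0" and LB: "\<forall>x. poly_eval c x \<ge> \<epsilon> * (\<Sum>\<alpha>\<in>Vinf c. mon (yabs x) (emb \<alpha>)) - K"
    using lower_bound[OF assms(1,2,4,5,6)] by blast
  define Sf where "Sf x = (\<Sum>\<alpha>\<in>Vinf c. mon (yabs x) (emb \<alpha>))" for x
  have finVi: "finite (Vinf c)" using finite_subset[OF Vinf_sub assms(1)] .
  have axis: "Sf x \<ge> \<bar>x$i\<bar> ^ (2*k)" if "(\<chi> j. if j = i then 2 * k else 0) \<in> Vinf c" for x i k
  proof -
    have "mon (yabs x) (emb (\<chi> j. if j = i then 2 * k else 0)) \<le> Sf x"
      unfolding Sf_def by (rule member_le_sum[OF that _ finVi]) (simp add: mon_nonneg)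
    moreover have "mon (yabs x) (emb (\<chi> j. if j = i then 2 * k else 0)) = \<bar>x$i\<bar> ^ (2*k)"
      by (simp add: mon_emb axis_pmon power_abs)
    ultimately show ?thesis by simp
  qed
  have cardpos: "0 < card (UNIV::'n set)"
  proof -
    have "finite (UNIV::'n set)" by simp
    moreover have "(UNIV::'n set) \<noteq> {}" by simp
    ultimately show ?thesis by (simp only: card_gt_0_iff) simp
  qed
  show ?thesis
    unfolding filterlim_at_top eventually_at_infinity
  proof
    fix Z :: real
    define T where "T = max 1 (2 * (Z + K) / \<epsilon>)"
    have T1: "T \<ge> 1" by (simp add: T_def)
    have "Z \<le> poly_eval c x" if nx: "real CARD('n) * T \<le> norm x" for x
    proof -
      have "\<exists>i. \<bar>x$i\<bar> \<ge> T"
      proof (rule ccontr)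
        assume "\<not> ?thesis"
        then have "\<And>i. i \<in> UNIV \<Longrightarrow> \<bar>x$i\<bar> < T" by (meson not_le)
        then have "(\<Sum>i\<in>UNIV. \<bar>x$i\<bar>) < of_nat (card (UNIV::'n set)) * T"
          using cardpos by (rule sum_bounded_above_strict)
        moreover have "norm x \<le> (\<Sum>i\<in>UNIV. \<bar>x$i\<bar>)" by (rule norm_le_l1_cart)
        ultimately show False using nx by simp
      qed
      then obtain i where i: "\<bar>x$i\<bar> \<ge> T" by blast
      obtain k where k: "k \<ge> 1" "(\<chi> j. if j = i then 2 * k else 0) \<in> Vinf c"
        using assms(4) unfolding C3_def by blast
      have "\<bar>x$i\<bar> \<le> \<bar>x$i\<bar> ^ (2*k)" using i T1 k(1) by (intro self_le_power) auto
      then have "Sf x \<ge> T" using axis[OF k(2), of x] i by linarith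
      then have "\<epsilon> * Sf x \<ge> \<epsilon> * T" using epos by simp
      moreover have "\<epsilon> * T \<ge> 2 * (Z + K)"
      proof -
        have "T \<ge> 2 * (Z + K) / \<epsilon>" by (simp add: T_def)
        then show ?thesis using epos by (simp add: field_simps)
      qed
      moreover have "poly_eval c x \<ge> \<epsilon> * Sf x - K" using LB by (simp add: Sf_def)
      moreover have "Z + K \<ge> 0 \<or> Z + K < 0" by linarith
      ultimately show ?thesis using epos Sf_def
        by (smt (verit) T1 \<open>T \<le> Sf x\<close> mult_le_cancel_left1)
    qed
    then show "\<exists>b. \<forall>x. b \<le> norm x \<longrightarrow> Z \<le> poly_eval c x" by blast
  qed
qed


end
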